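(* With the notation of the context, the Laurent polynomials $\varepsilon^\sigma_i[y;q^{-1}]:=e^\sigma_i[y;a^{-1},b^{-1},c^{-1},d^{-1}\mid q^{-1}]$ satisfy, for $1\le i\le D-1$, $$\varepsilon^+_{i-1}[y;q^{-1}]=\frac{ab(1-q^i)(1-cdq^{i-1})}{ab-1}\frac{(abcd;q)_{2i-1}}{a^i(q,bc,bd,cd;q)_i}\big(P_i-Q_i\big),$$ $$\varepsilon^-_i[y;q^{-1}]=\frac{(1-abq^i)(1-abcdq^{i-1})}{1-ab}\frac{(abcd;q)_{2i-1}}{a^i(q,bc,bd,cd;q)_i}\Big(P_i-\frac{ab(1-q^i)(1-cdq^{i-1})}{(1-abq^i)(1-abcdq^{i-1})}Q_i\Big),$$ and moreover $\varepsilon^-_0[y;q^{-1}]=1$ and $\varepsilon^+_{D-1}[y;q^{-1}]=\frac{(abcd;q)_{2D-1}}{a^D(q,bc,bd;q)_D(cd;q)_{D-1}}P_D$, where $P_i=P_i[y;a,b,c,d\mid q]$ and $Q_i=a^{-1}b^{-1}y^{-1}(1-ay)(1-by)P_{i-1}[y;aq,bq,c,d\mid q]$.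
   Context: $q\in\mathbb{C}^*$ is not a root of unity; for $p\in\mathbb{C}^*$, $(\alpha;p)_n=(1-\alpha)(1-\alpha p)\cdots(1-\alpha p^{n-1})$ and $(\alpha_1,\dots,\alpha_r;p)_n=\prod_k(\alpha_k;p)_n$. $\Gamma$ is a $Q$-polynomial distance-regular graph of diameter $D\ge3$ containing a Delsarte clique and of $q$-Racah type: relative to a fixed vertex, its Leonard system (adjacency matrix, dual adjacency matrix, primitive and dual primitive idempotents in the $Q$-polynomial ordering) has eigenvalues $\theta_i=\theta_0+h(1-q^i)(1-sq^{i+1})q^{-i}$, dual eigenvalues $\theta^*_i=\theta^*_0+h^*(1-q^i)(1-s^*q^{i+1})q^{-i}$, first split sequence $\varphi_i=hh^*q^{1-2i}(1-q^i)(1-q^{i-D-1})(1-r_1q^i)(1-r_2q^i)$ and second split sequence $\phi_i=hh^*q^{1-2i}(1-q^i)(1-q^{i-D-1})(r_1-s^*q^i)(r_2-s^*q^i)/s^*$, for nonzero $h,h^*,s,s^*,r_1,r_2$ with $r_1r_2=ss^*q^{D+1}$; none of $q^i,r_1q^i,r_2q^i,s^*q^i/r_1,s^*q^i/r_2$ equals $1$ for $1\le i\le D$, and neither $sq^i$ nor $s^*q^i$ equals $1$ for $2\le i\le 2D$. Square roots $q^{1/2},s^{1/2},s^{*1/2},r_1^{1/2},r_2^{1/2}$ are fixed with $r_1^{1/2}r_2^{1/2}=s^{1/2}s^{*1/2}q^{(D+1)/2}$, $q^{m/2}=(q^{1/2})^m$. Let $a=\frac{r_1^{1/2}r_2^{1/2}}{s^{*1/2}q^{D/2}}$,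 $b=\frac{s^{*1/2}}{r_1^{1/2}r_2^{1/2}q^{D/2}}$, $c=\frac{r_2^{1/2}s^{*1/2}q^{(D+2)/2}}{r_1^{1/2}}$, $d=\frac{r_1^{1/2}s^{*1/2}q^{(D+2)/2}}{r_2^{1/2}}$ (so $ab=q^{-D}$). For nonzero $\alpha,\beta,\gamma,\delta,p$: $P_i[y;\alpha,\beta,\gamma,\delta\mid p]=\frac{(\alpha\beta,\alpha\gamma,\alpha\delta;p)_i}{\alpha^i(\alpha\beta\gamma\delta p^{i-1};p)_i}\sum_{j=0}^i\frac{(p^{-i},\alpha\beta\gamma\delta p^{i-1},\alpha y,\alpha y^{-1};p)_j}{(\alpha\beta,\alpha\gamma,\alpha\delta,p;p)_j}p^j$, and (whenever denominators are nonzero) for $1\le i\le D-1$ $e^+_{i-1}[y;\alpha,\beta,\gamma,\delta\mid p]=\frac{\alpha\beta(1-p^i)(1-\gamma\delta p^{i-1})}{(\alpha\beta-1)(1-\alpha\beta\gamma\delta p^{2i-1})}\frac{(\alpha\beta\gamma\delta;p)_{2i}}{\alpha^i(p,\beta\gamma,\beta\delta,\gamma\delta;p)_i}\Big(P_i[y;\alpha,\beta,\gamma,\delta\mid p]-y(1-\alpha y^{-1})(1-\beta y^{-1})P_{i-1}[y;\alpha p,\beta p,\gamma,\delta\mid p]\Big)$, $e^-_i[y;\alpha,\beta,\gamma,\delta\mid p]=\frac{(1-\alpha\beta p^i)(1-\alpha\beta\gamma\delta p^{i-1})}{(1-\alpha\beta)(1-\alpha\beta\gamma\delta p^{2i-1})}\frac{(\alpha\beta\gamma\delta;p)_{2i}}{\alpha^i(p,\beta\gamma,\beta\delta,\gamma\delta;p)_i}\Big(P_i[y;\alpha,\beta,\gamma,\delta\mid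 p]-\frac{\alpha\beta(1-p^i)(1-\gamma\delta p^{i-1})}{(1-\alpha\beta p^i)(1-\alpha\beta\gamma\delta p^{i-1})}y(1-\alpha y^{-1})(1-\beta y^{-1})P_{i-1}[y;\alpha p,\beta p,\gamma,\delta\mid p]\Big)$, $e^-_0=1$, $e^+_{D-1}[y;\alpha,\beta,\gamma,\delta\mid p]=\frac{(\alpha\beta\gamma\delta;p)_{2D-1}}{\alpha^D(p,\beta\gamma,\beta\delta;p)_D(\gamma\delta;p)_{D-1}}P_D[y;\alpha,\beta,\gamma,\delta\mid p]$. *)

theory Defs
  imports Complex_Main
begin

definition qpoch :: "complex \<Rightarrow> complex \<Rightarrow> nat \<Rightarrow> complex" where
  "qpoch \<alpha> p n = (\<Prod>k<n. (1 - \<alpha> * p ^ k))"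

definition AWP :: "nat \<Rightarrow> complex \<Rightarrow> complex \<Rightarrow> complex \<Rightarrow> complex \<Rightarrow> complex \<Rightarrow> complex \<Rightarrow> complex" where
  "AWP i y \<alpha> \<beta> \<gamma> \<delta> p =
     (qpoch (\<alpha>*\<beta>) p i * qpoch (\<alpha>*\<gamma>) p i * qpoch (\<alpha>*\<delta>) p i)
       / (\<alpha> ^ i * qpoch (\<alpha>*\<beta>*\<gamma>*\<delta> * p ^ (i - 1)) p i)
     * (\<Sum>j\<le>i. (qpoch (inverse p ^ i) p j * qpoch (\<alpha>*\<beta>*\<gamma>*\<delta> * p ^ (i - 1)) p j
                    * qpoch (\<alpha> * y) p j * qpoch (\<alpha> * inverse y) p j)
                  / (qpoch (\<alpha>*\<beta>) p j * qpoch (\<alpha>*\<gamma>) p j * qpoch (\<alpha>*\<delta>) p j * qpoch p p j)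
                  * p ^ j)"

text \<open>The general formula for e^+_{i-1} (valid for 1 <= i <= D-1).\<close>
definition eplus_gen :: "nat \<Rightarrow> complex \<Rightarrow> complex \<Rightarrow> complex \<Rightarrow> complex \<Rightarrow> complex \<Rightarrow> complex \<Rightarrow> complex" where
  "eplus_gen i y \<alpha> \<beta> \<gamma> \<delta> p =
     (\<alpha>*\<beta> * (1 - p ^ i) * (1 - \<gamma>*\<delta> * p ^ (i - 1)))
       / ((\<alpha>*\<beta> - 1) * (1 - \<alpha>*\<beta>*\<gamma>*\<delta> * p ^ (2*i - 1)))
     * qpoch (\<alpha>*\<beta>*\<gamma>*\<delta>) p (2*i)
       / (\<alpha> ^ i * (qpoch p p i * qpoch (\<beta>*\<gamma>) p i * qpoch (\<beta>*\<delta>) p i * qpoch (\<gamma>*\<delta>) p i))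
     * (AWP i y \<alpha> \<beta> \<gamma> \<delta> p
        - y * (1 - \<alpha> * inverse y) * (1 - \<beta> * inverse y) * AWP (i - 1) y (\<alpha>*p) (\<beta>*p) \<gamma> \<delta> p)"

definition eplus_last :: "nat \<Rightarrow> complex \<Rightarrow> complex \<Rightarrow> complex \<Rightarrow> complex \<Rightarrow> complex \<Rightarrow> complex \<Rightarrow> complex" where
  "eplus_last D y \<alpha> \<beta> \<gamma> \<delta> p =
     qpoch (\<alpha>*\<beta>*\<gamma>*\<delta>) p (2*D - 1)
       / (\<alpha> ^ D * (qpoch p p D * qpoch (\<beta>*\<gamma>) p D * qpoch (\<beta>*\<delta>) p D * qpoch (\<gamma>*\<delta>) p (D - 1)))
     * AWP D y \<alpha> \<beta> \<gamma> \<delta> p"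

definition eplus :: "nat \<Rightarrow> nat \<Rightarrow> complex \<Rightarrow> complex \<Rightarrow> complex \<Rightarrow> complex \<Rightarrow> complex \<Rightarrow> complex \<Rightarrow> complex" where
  "eplus D j y \<alpha> \<beta> \<gamma> \<delta> p =
     (if j + 1 = D then eplus_last D y \<alpha> \<beta> \<gamma> \<delta> p else eplus_gen (j + 1) y \<alpha> \<beta> \<gamma> \<delta> p)"

definition eminus :: "nat \<Rightarrow> complex \<Rightarrow> complex \<Rightarrow> complex \<Rightarrow> complex \<Rightarrow> complex \<Rightarrow> complex \<Rightarrow> complex" where
  "eminus i y \<alpha> \<beta> \<gamma> \<delta> p =
     (if i = 0 then 1 else
     (1 - \<alpha>*\<beta> * p ^ i) * (1 - \<alpha>*\<beta>*\<gamma>*\<delta> * p ^ (i - 1))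
       / ((1 - \<alpha>*\<beta>) * (1 - \<alpha>*\<beta>*\<gamma>*\<delta> * p ^ (2*i - 1)))
     * qpoch (\<alpha>*\<beta>*\<gamma>*\<delta>) p (2*i)
       / (\<alpha> ^ i * (qpoch p p i * qpoch (\<beta>*\<gamma>) p i * qpoch (\<beta>*\<delta>) p i * qpoch (\<gamma>*\<delta>) p i))
     * (AWP i y \<alpha> \<beta> \<gamma> \<delta> p
        - (\<alpha>*\<beta> * (1 - p ^ i) * (1 - \<gamma>*\<delta> * p ^ (i - 1)))
            / ((1 - \<alpha>*\<beta> * p ^ i) * (1 - \<alpha>*\<beta>*\<gamma>*\<delta> * p ^ (i - 1)))
          * y * (1 - \<alpha> * inverse y) * (1 - \<beta> * inverse y) * AWP (i - 1) y (\<alpha>*p) (\<beta>*p) \<gamma> \<delta> p))"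

end

theory Submission
  imports Defs
begin

definition Wp :: "complex \<Rightarrow> nat \<Rightarrow> complex" where
  "Wp p n = (\<Prod>k<n. inverse p ^ k)"

lemma Wp_nz: "p \<noteq> 0 \<Longrightarrow> Wp p n \<noteq> 0"
  unfolding Wp_def by (simp add: prod_zero_iff)

lemma Wp_Suc: "Wp p (Suc n) = Wp p n * inverse p ^ n"
  unfolding Wp_def by simp

lemma Wp_pow: "Wp p n = inverse p ^ (\<Sum>k<n. k)"
  unfolding Wp_def by (simp add: power_sum)

lemma T2: "2 * (\<Sum>k<n. k) = n * (n - 1::nat)"
proof (induction n)
  case 0 then show ?case by simp
next
  case (Suc n) then show ?case by (cases n) (auto simp: algebra_simps)
qed

lemma Tdouble: "(\<Sum>k<2*i. k) = 4 * (\<Sum>k<i. k) + (i::nat)"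
proof -
  have "2 * (\<Sum>k<2*i. k) = 2*i*(2*i-1)" by (rule T2)
  moreover have "2 * (\<Sum>k<i. k) = i*(i-1)" by (rule T2)
  ultimately show ?thesis by (cases i) (auto simp: algebra_simps)
qed

lemma qpoch_Suc: "qpoch x p (Suc n) = qpoch x p n * (1 - x * p ^ n)"
  unfolding qpoch_def by simp

lemma qpoch_inv:
  assumes "x \<noteq> 0" "p \<noteq> 0"
  shows "qpoch (inverse x) (inverse p) n = (- inverse x) ^ n * Wp p n * qpoch x p n"
proof (induction n)
  case 0 then show ?case by (simp add: qpoch_def Wp_def)
next
  case (Suc n)
  have "1 - inverse x * inverse p ^ n = (- inverse x) * inverse p ^ n * (1 - x * p ^ n)"
    using assms by (simp add: field_simps power_inverse)
  then show ?case using Suc by (simp add: qpoch_Suc Wp_Suc)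
qed

lemma Wp_sq: "p \<noteq> 0 \<Longrightarrow> Wp p i ^ 2 * p ^ (i * (i - 1)) = 1"
proof -
  assume p: "p \<noteq> 0"
  have "Wp p i ^ 2 = inverse p ^ (i * (i - 1))"
    unfolding Wp_pow power_mult[symmetric] T2[symmetric] by (simp add: mult.commute)
  then show ?thesis using p by (simp add: power_inverse)
qed

lemma Wp_double: "p \<noteq> 0 \<Longrightarrow> Wp p (2*i) * p ^ i = Wp p i ^ 4"
proof -
  assume p: "p \<noteq> 0"
  have "Wp p (2*i) * p ^ i = inverse p ^ (4 * (\<Sum>k<i. k)) * (inverse p ^ i * p ^ i)"
    unfolding Wp_pow Tdouble power_add by simp
  also have "\<dots> = Wp p i ^ 4" using p unfolding Wp_pow
    by (simp add: power_inverse) (metis power_mult mult.commute)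
  finally show ?thesis .
qed

definition Gen :: "nat \<Rightarrow> complex \<Rightarrow> complex \<Rightarrow> complex \<Rightarrow> complex \<Rightarrow> complex \<Rightarrow> complex \<Rightarrow> complex \<Rightarrow> complex \<Rightarrow> complex" where
  "Gen i al u v w s t1 t2 p = (qpoch u p i * qpoch v p i * qpoch w p i) / (al ^ i * qpoch s p i)
     * (\<Sum>j\<le>i. (qpoch (inverse p ^ i) p j * qpoch s p j * qpoch t1 p j * qpoch t2 p j)
                  / (qpoch u p j * qpoch v p j * qpoch w p j * qpoch p p j) * p ^ j)"

lemma regroup4:
  fixes g1 g2 g3 g4 h1 h2 h3 h4 A1 A2 A3 A4 B1 B2 B3 B4 r s :: complex
  assumes "h1 \<noteq> 0" "h2 \<noteq> 0" "h3 \<noteq> 0" "h4 \<noteq> 0"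
    and "g1*g2*g3*g4*r = s*(h1*h2*h3*h4)"
  shows "(g1*A1*(g2*A2)*(g3*A3)*(g4*A4))/(h1*B1*(h2*B2)*(h3*B3)*(h4*B4)) * r
       = (A1*A2*A3*A4)/(B1*B2*B3*B4) * s"
proof -
  have "(g1*A1*(g2*A2)*(g3*A3)*(g4*A4))/(h1*B1*(h2*B2)*(h3*B3)*(h4*B4)) * r
      = ((g1*g2*g3*g4*r)/(h1*h2*h3*h4)) * ((A1*A2*A3*A4)/(B1*B2*B3*B4))"
    by (simp add: mult_ac)
  also have "(g1*g2*g3*g4*r)/(h1*h2*h3*h4) = s" using assms by (simp add: field_simps)
  finally show ?thesis by simp
qed

lemma regroup3:
  fixes g1 g2 g3 h1 A1 A2 A3 B1 x y :: complex
  assumes "h1 \<noteq> 0" "x \<noteq> 0" "y \<noteq> 0"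
    and "g1*g2*g3*y = x*h1"
  shows "(g1*A1*(g2*A2)*(g3*A3))/(x*(h1*B1)) = (A1*A2*A3)/(y*B1)"
proof -
  have "(g1*A1*(g2*A2)*(g3*A3))/(x*(h1*B1)) = ((g1*g2*g3)/(x*h1)) * ((A1*A2*A3)/B1)"
    by (simp add: mult_ac)
  also have "(g1*g2*g3)/(x*h1) = inverse y" using assms by (simp add: field_simps)
  finally show ?thesis by (simp add: field_simps)
qed

lemma neg4: "(-a)^n * (-b)^n * (-c)^n * (-d)^n = ((a*b*c*d)::complex)^n"
  unfolding power_mult_distrib[symmetric] by simp

lemma neg3: "(-a)^n * (-b)^n * (-c)^n = (-(a*b*c)::complex)^n"
  unfolding power_mult_distrib[symmetric] by simp

lemma aux1: "(W::complex) \<noteq> 0 \<Longrightarrow> A \<noteq> 0 \<Longrightarrow> S \<noteq> 0 \<Longrightarrow>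
   m * inverse (W^2 * (A^2 * S)) * W^3 * A = inverse A * (m * inverse S * W)"
  by (simp add: field_simps power2_eq_square power3_eq_cube)
lemma aux2: "(p::complex) \<noteq> 0 \<Longrightarrow> inverse (X*p) ^ j = p^j * inverse (X*p*p) ^ j"
proof -
  assume p: "p \<noteq> 0"
  have "p^j * inverse (X*p*p) ^ j = (p * inverse (X*p*p)) ^ j" by (simp add: power_mult_distrib)
  also have "p * inverse (X*p*p) = inverse (X*p)" using p by (simp add: field_simps)
  finally show ?thesis by simp
qed
lemma aux3: "(- (inverse u * inverse v * inverse w)) ^ i = ((-1) ^ i * inverse ((u*v*w)^i) :: complex)"
proof -
  have "-(inverse u*inverse v*inverse w) = (-1) * inverse (u*v*w)" by (simp add: inverse_mult_distrib)
  then show ?thesis by (simp only: power_mult_distrib power_inverse)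
qed

lemma Gen_inv:
  assumes nz: "al \<noteq> 0" "u \<noteq> 0" "v \<noteq> 0" "w \<noteq> 0" "s \<noteq> 0" "t1 \<noteq> 0" "t2 \<noteq> 0" "p \<noteq> 0"
    and rel1: "u*v*w = inverse p ^ i * s * t1 * t2 * p"
    and rel2: "Wp p i ^ 2 * (al^2 * s)^i = (u*v*w)^i"
  shows "Gen i (inverse al) (inverse u) (inverse v) (inverse w) (inverse s) (inverse t1) (inverse t2) (inverse p)
       = Gen i al u v w s t1 t2 p"
proof -
  let ?G = "\<lambda>x n. (- inverse x) ^ n * Wp p n"
  have Q: "\<And>x n. x \<noteq> 0 \<Longrightarrow> qpoch (inverse x) (inverse p) n = ?G x n * qpoch x p n"
    using nz(8) by (simp add: qpoch_inv)
  have Gnz: "\<And>x n. x \<noteq> 0 \<Longrightarrow> ?G x n \<noteq> 0" using nz(8) by (simp add: Wp_nz)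
  have X: "inverse (inverse p) ^ i = inverse (inverse p ^ i)" by (simp add: power_inverse)
  have Xnz: "inverse p ^ i \<noteq> 0" using nz(8) by simp
  have pre: "(qpoch (inverse u) (inverse p) i * qpoch (inverse v) (inverse p) i * qpoch (inverse w) (inverse p) i)
       / (inverse al ^ i * qpoch (inverse s) (inverse p) i)
     = (qpoch u p i * qpoch v p i * qpoch w p i) / (al ^ i * qpoch s p i)"
    unfolding Q[OF nz(2)] Q[OF nz(3)] Q[OF nz(4)] Q[OF nz(5)]
  proof (rule regroup3)
    show "?G s i \<noteq> 0" by (rule Gnz[OF nz(5)])
    show "inverse al ^ i \<noteq> 0" "al ^ i \<noteq> 0" using nz by auto
    have "?G u i * ?G v i * ?G w i * al ^ i = ((- inverse u) ^ i * (- inverse v) ^ i * (- inverse w) ^ i) * Wp p i ^ 3 * al ^ i"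
      by (simp only: power3_eq_cube mult_ac)
    also have "\<dots> = (- (inverse u * inverse v * inverse w)) ^ i * Wp p i ^ 3 * al ^ i"
      by (simp only: neg3)
    also have "\<dots> = inverse al ^ i * ?G s i"
    proof -
      have eqa: "(al^2*s)^i = (al^i)^2 * s^i" by (metis power_mult power_mult_distrib mult.commute)
      have "(- (inverse u * inverse v * inverse w)) ^ i * Wp p i ^ 3 * al ^ i
          = (-1)^i * inverse (Wp p i^2 * ((al^i)^2 * s^i)) * Wp p i^3 * al^i"
        unfolding aux3 rel2[symmetric] eqa by simp
      also have "\<dots> = inverse (al^i) * ((-1)^i * inverse (s^i) * Wp p i)"
        by (rule aux1) (use nz Wp_nz in auto)
      also have "\<dots> = inverse al ^ i * ?G s i"
      proof -
        have "- inverse s = (-1) * inverse s" by simp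
        then show ?thesis by (simp only: power_mult_distrib power_inverse mult_ac)
      qed
      finally show ?thesis .
    qed
    finally show "?G u i * ?G v i * ?G w i * al ^ i = inverse al ^ i * ?G s i" .
  qed
  have sm: "\<And>j. (qpoch (inverse (inverse p) ^ i) (inverse p) j * qpoch (inverse s) (inverse p) j
                 * qpoch (inverse t1) (inverse p) j * qpoch (inverse t2) (inverse p) j)
            / (qpoch (inverse u) (inverse p) j * qpoch (inverse v) (inverse p) j
               * qpoch (inverse w) (inverse p) j * qpoch (inverse p) (inverse p) j) * inverse p ^ j
          = (qpoch (inverse p ^ i) p j * qpoch s p j * qpoch t1 p j * qpoch t2 p j)
            / (qpoch u p j * qpoch v p j * qpoch w p j * qpoch p p j) * p ^ j"
    unfolding X Q[OF Xnz] Q[OF nz(5)] Q[OF nz(6)] Q[OF nz(7)] Q[OF nz(2)] Q[OF nz(3)] Q[OF nz(4)] Q[OF nz(8)]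
  proof (rule regroup4)
    fix j
    show "?G u j \<noteq> 0" "?G v j \<noteq> 0" "?G w j \<noteq> 0" "?G p j \<noteq> 0" using Gnz nz by auto
    have "?G (inverse p ^ i) j * ?G s j * ?G t1 j * ?G t2 j * inverse p ^ j
        = ((- inverse (inverse p ^ i)) ^ j * (- inverse s) ^ j * (- inverse t1) ^ j * (- inverse t2) ^ j) * Wp p j ^ 4 * inverse p ^ j"
      by (simp only: power4_eq_xxxx mult_ac)
    also have "\<dots> = (inverse (inverse p ^ i) * inverse s * inverse t1 * inverse t2) ^ j * Wp p j ^ 4 * inverse p ^ j"
      by (simp only: neg4)
    also have "\<dots> = (inverse (inverse p ^ i * s * t1 * t2 * p)) ^ j * Wp p j ^ 4"
    proof -
      have "inverse (inverse p ^ i * s * t1 * t2 * p) = inverse (inverse p ^ i) * inverse s * inverse t1 * inverse t2 * inverse p"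
        by (simp only: inverse_mult_distrib)
      then show ?thesis by (simp only: power_mult_distrib mult_ac)
    qed
    also have "\<dots> = p ^ j * (inverse (u*v*w*p)) ^ j * Wp p j ^ 4"
      unfolding rel1 aux2[OF nz(8), of "inverse p ^ i * s * t1 * t2" j] by (simp only: mult.assoc)
    also have "\<dots> = p ^ j * (((- inverse u) ^ j * (- inverse v) ^ j * (- inverse w) ^ j * (- inverse p) ^ j) * Wp p j ^ 4)"
      by (simp only: neg4) (simp add: inverse_mult_distrib mult_ac)
    also have "\<dots> = p ^ j * (?G u j * ?G v j * ?G w j * ?G p j)"
      by (simp only: power4_eq_xxxx mult_ac)
    finally show "?G (inverse p ^ i) j * ?G s j * ?G t1 j * ?G t2 j * inverse p ^ j
        = p ^ j * (?G u j * ?G v j * ?G w j * ?G p j)" .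
  qed
  show ?thesis unfolding Gen_def pre using sm by simp
qed


lemma AWP_Gen: "AWP i y al be ga de p = Gen i al (al*be) (al*ga) (al*de) (al*be*ga*de*p^(i-1)) (al*y) (al*inverse y) p"
  unfolding AWP_def Gen_def by simp

lemma Gen_swap: "Gen i al u v w s t1 t2 p = Gen i al u v w s t2 t1 p"
  unfolding Gen_def by (simp add: mult_ac)

lemma AWP_inv:
  assumes nz: "al \<noteq> 0" "be \<noteq> 0" "ga \<noteq> 0" "de \<noteq> 0" "p \<noteq> 0" "y \<noteq> 0"
  shows "AWP i y (inverse al) (inverse be) (inverse ga) (inverse de) (inverse p) = AWP i y al be ga de p"
proof (cases "i = 0")
  case True then show ?thesis by (simp add: AWP_def qpoch_def)
next
  case False
  let ?s = "al*be*ga*de*p^(i-1)"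
  have e1: "inverse al * inverse be = inverse (al*be)" "inverse al * inverse ga = inverse (al*ga)"
     "inverse al * inverse de = inverse (al*de)"
     "inverse al * inverse be * inverse ga * inverse de * inverse p ^ (i-1) = inverse ?s"
     "inverse al * y = inverse (al * inverse y)" "inverse al * inverse y = inverse (al * y)"
     "inverse (al*be) * inverse ga * inverse de * inverse p ^ (i-1) = inverse ?s"
    by (simp_all add: inverse_mult_distrib power_inverse)
  have r1: "al*be*(al*ga)*(al*de) = inverse p ^ i * ?s * (al * inverse y) * (al*y) * p"
  proof -
    have "p^(i-1) * p = p^i" using False by (metis Suc_pred' power_Suc2 bot_nat_0.not_eq_extremum)
    then show ?thesis using nz by (simp add: field_simps)
  qed
  have r2: "Wp p i ^ 2 * (al^2 * ?s)^i = (al*be*(al*ga)*(al*de))^i"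
  proof -
    have "al^2 * ?s = (al*be*(al*ga)*(al*de)) * p^(i-1)" by (simp add: power2_eq_square mult_ac)
    moreover have "(p^(i-1))^i = p^(i*(i-1))" by (metis power_mult mult.commute)
    ultimately have "(al^2 * ?s)^i = (al*be*(al*ga)*(al*de))^i * p^(i*(i-1))"
      by (simp only: power_mult_distrib)
    then show ?thesis using Wp_sq[OF nz(5), of i] by (simp add: mult_ac)
  qed
  have "AWP i y (inverse al) (inverse be) (inverse ga) (inverse de) (inverse p)
      = Gen i (inverse al) (inverse (al*be)) (inverse (al*ga)) (inverse (al*de)) (inverse ?s)
            (inverse (al * inverse y)) (inverse (al*y)) (inverse p)"
    unfolding AWP_Gen e1 ..
  also have "\<dots> = Gen i al (al*be) (al*ga) (al*de) ?s (al * inverse y) (al*y) p"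
    by (rule Gen_inv) (use nz r1 r2 in simp_all)
  also have "\<dots> = AWP i y al be ga de p" unfolding AWP_Gen by (rule Gen_swap)
  finally show ?thesis .
qed


lemma ratio_gh:
  fixes a b c d q :: complex
  assumes nz: "a \<noteq> 0" "b \<noteq> 0" "c \<noteq> 0" "d \<noteq> 0" "q \<noteq> 0" and i: "1 \<le> i"
  shows "((- inverse (a*b*c*d)) ^ (2*i) * Wp q (2*i) * (1 - a*b*c*d*q^(2*i-1)))
     / (inverse a ^ i * ((- inverse q) ^ i * Wp q i * ((- inverse (b*c)) ^ i * Wp q i)
          * ((- inverse (b*d)) ^ i * Wp q i) * ((- inverse (c*d)) ^ i * Wp q i)))
     = (1 - a*b*c*d*q^(2*i-1)) / a^i"
proof -
  define W where "W = Wp q i"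
  define A where "A = a^i"
  define B where "B = b^i"
  define C where "C = c^i"
  define E where "E = d^i"
  define u where "u = q^i"
  have Wnz: "W \<noteq> 0" unfolding W_def using nz by (simp add: Wp_nz)
  have nz2: "A \<noteq> 0" "B \<noteq> 0" "C \<noteq> 0" "E \<noteq> 0" "u \<noteq> 0" unfolding A_def B_def C_def E_def u_def using nz by auto
  have g1: "(- inverse (a*b*c*d)) ^ (2*i) = inverse (A*B*C*E) ^ 2"
    unfolding A_def B_def C_def E_def
    by (simp add: power_mult power_mult_distrib power_inverse mult.commute[of 2 i] flip: power_mult)
  have g2: "Wp q (2*i) = W^4 * inverse u"
    unfolding W_def u_def using Wp_double[OF nz(5), of i] nz(5) by (simp add: field_simps)
  have h1: "(- inverse q) ^ i * Wp q i * ((- inverse (b*c)) ^ i * Wp q i)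
          * ((- inverse (b*d)) ^ i * Wp q i) * ((- inverse (c*d)) ^ i * Wp q i)
          = ((- inverse q) ^ i * (- inverse (b*c)) ^ i * (- inverse (b*d)) ^ i * (- inverse (c*d)) ^ i) * W^4"
    unfolding W_def by (simp only: power4_eq_xxxx mult_ac)
  also have "\<dots> = inverse (u*B^2*C^2*E^2) * W^4"
  proof -
    have "inverse q * inverse (b*c) * inverse (b*d) * inverse (c*d) = inverse (q*b^2*c^2*d^2)"
      by (simp add: inverse_mult_distrib power2_eq_square mult_ac)
    moreover have "(q*b^2*c^2*d^2)^i = u*B^2*C^2*E^2"
      unfolding u_def B_def C_def E_def by (simp add: power_mult_distrib flip: power_mult) (simp add: mult.commute)
    ultimately show ?thesis by (simp only: neg4 power_inverse)
  qed
  finally have h: "(- inverse q) ^ i * Wp q i * ((- inverse (b*c)) ^ i * Wp q i)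
          * ((- inverse (b*d)) ^ i * Wp q i) * ((- inverse (c*d)) ^ i * Wp q i) = inverse (u*B^2*C^2*E^2) * W^4" .
  have ia: "inverse a ^ i = inverse A" unfolding A_def by (simp add: power_inverse)
  show ?thesis unfolding g1 g2 h ia A_def[symmetric]
    using Wnz nz2 by (simp add: field_simps power2_eq_square)
qed


lemma qpow_sub:
  fixes a b c d q :: complex
  assumes "q \<noteq> 0" "1 \<le> i"
  shows "q^(i-1) = q^i / q" "q^(2*i-1) = (q^i)^2 / q"
proof -
  have "q^(i-1) * q = q^i" using assms(2) by (metis Suc_pred' power_Suc2 less_eq_Suc_le One_nat_def)
  then show "q^(i-1) = q^i / q" using assms(1) by (simp add: field_simps)
  have "q^(2*i-1) * q = q^(2*i)" using assms(2) by (metis Suc_pred' power_Suc2 less_eq_Suc_le One_nat_def mult_pos_pos zero_less_numeral)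
  then show "q^(2*i-1) = (q^i)^2 / q" using assms(1) by (simp add: field_simps power_mult mult.commute[of 2 i] flip: power_mult)
qed

lemma Kplus:
  fixes a b c d q :: complex
  assumes nz: "a \<noteq> 0" "b \<noteq> 0" "c \<noteq> 0" "d \<noteq> 0" "q \<noteq> 0" and i: "1 \<le> i"
    and ab: "a*b \<noteq> 1" and e: "1 - a*b*c*d*q^(2*i-1) \<noteq> 0"
  shows "(inverse a * inverse b * (1 - inverse q ^ i) * (1 - inverse c * inverse d * inverse q ^ (i - 1)))
      / ((inverse a * inverse b - 1) * (1 - inverse a * inverse b * inverse c * inverse d * inverse q ^ (2 * i - 1)))
      * (1 - a*b*c*d*q^(2*i-1)) = (a*b*(1-q^i)*(1-c*d*q^(i-1)))/(a*b-1)"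
proof -
  define u where "u = q^i"
  have u: "u \<noteq> 0" unfolding u_def using nz by simp
  define X where "X = a*b*c*d*u^2 - q"
  define Y where "Y = 1 - a*b"
  define Z where "Z = c*d*u - q"
  define V where "V = u - 1"
  have X: "X \<noteq> 0" using e unfolding X_def qpow_sub[OF nz(5) i] u_def[symmetric] using nz
    by (auto simp: field_simps)
  have Y: "Y \<noteq> 0" using ab unfolding Y_def by simp
  have f1: "1 - inverse u = V/u" unfolding V_def using u by (simp add: field_simps)
  have f2: "1 - inverse c * inverse d * inverse (u/q) = Z/(c*d*u)" unfolding Z_def using u nz by (simp add: field_simps)
  have f3: "inverse a * inverse b - 1 = Y/(a*b)" unfolding Y_def using nz by (simp add: field_simps)
  have f4: "1 - inverse a * inverse b * inverse c * inverse d * inverse (u^2/q) = X/(a*b*c*d*u^2)"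
    unfolding X_def using u nz by (simp add: field_simps)
  have f5: "1 - a*b*c*d*(u^2/q) = -X/q" unfolding X_def using nz by (simp add: field_simps)
  have f6: "1 - u = -V" unfolding V_def by simp
  have f7: "1 - c*d*(u/q) = -Z/q" unfolding Z_def using nz by (simp add: field_simps)
  have f8: "a*b - 1 = -Y" unfolding Y_def by simp
  show ?thesis unfolding power_inverse qpow_sub[OF nz(5) i] u_def[symmetric] f1 f2 f3 f4 f5 f6 f7 f8
    using nz u X Y by (simp add: field_simps power2_eq_square)
qed

lemma Kminus:
  fixes a b c d q :: complex
  assumes nz: "a \<noteq> 0" "b \<noteq> 0" "c \<noteq> 0" "d \<noteq> 0" "q \<noteq> 0" and i: "1 \<le> i"
    and ab: "a*b \<noteq> 1" and e: "1 - a*b*c*d*q^(2*i-1) \<noteq> 0"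
  shows "((1 - inverse a * inverse b * inverse q ^ i) * (1 - inverse a * inverse b * inverse c * inverse d * inverse q ^ (i - 1)))
      / ((1 - inverse a * inverse b) * (1 - inverse a * inverse b * inverse c * inverse d * inverse q ^ (2 * i - 1)))
      * (1 - a*b*c*d*q^(2*i-1)) = ((1 - a*b*q^i)*(1 - a*b*c*d*q^(i-1)))/(1 - a*b)"
proof -
  define u where "u = q^i"
  have u: "u \<noteq> 0" unfolding u_def using nz by simp
  define X where "X = a*b*c*d*u^2 - q"
  define Y where "Y = a*b - 1"
  define M where "M = a*b*u - 1"
  define N where "N = a*b*c*d*u - q"
  have X: "X \<noteq> 0" using e unfolding X_def qpow_sub[OF nz(5) i] u_def[symmetric] using nz
    by (auto simp: field_simps)
  have Y: "Y \<noteq> 0" using ab unfolding Y_def by simp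
  have f1: "1 - inverse a * inverse b * inverse u = M/(a*b*u)" unfolding M_def using u nz by (simp add: field_simps)
  have f2: "1 - inverse a * inverse b * inverse c * inverse d * inverse (u/q) = N/(a*b*c*d*u)" unfolding N_def using u nz by (simp add: field_simps)
  have f3: "1 - inverse a * inverse b = Y/(a*b)" unfolding Y_def using nz by (simp add: field_simps)
  have f4: "1 - inverse a * inverse b * inverse c * inverse d * inverse (u^2/q) = X/(a*b*c*d*u^2)"
    unfolding X_def using u nz by (simp add: field_simps)
  have f5: "1 - a*b*c*d*(u^2/q) = -X/q" unfolding X_def using nz by (simp add: field_simps)
  have f6: "1 - a*b*u = -M" unfolding M_def by simp
  have f7: "1 - a*b*c*d*(u/q) = -N/q" unfolding N_def using nz by (simp add: field_simps)
  have f8: "1 - a*b = -Y" unfolding Y_def by simp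
  show ?thesis unfolding power_inverse qpow_sub[OF nz(5) i] u_def[symmetric] f1 f2 f3 f4 f5 f6 f7 f8
    using nz u X Y by (simp add: field_simps power2_eq_square)
qed

lemma Fminus:
  fixes a b c d q :: complex
  assumes nz: "a \<noteq> 0" "b \<noteq> 0" "c \<noteq> 0" "d \<noteq> 0" "q \<noteq> 0" and i: "1 \<le> i"
    and f1: "1 - a*b*q^i \<noteq> 0" and f2: "1 - a*b*c*d*q^(i-1) \<noteq> 0"
  shows "(inverse a * inverse b * (1 - inverse q ^ i) * (1 - inverse c * inverse d * inverse q ^ (i - 1)))
            / ((1 - inverse a * inverse b * inverse q ^ i) * (1 - inverse a * inverse b * inverse c * inverse d * inverse q ^ (i - 1)))
       = (a*b * (1 - q^i) * (1 - c*d * q^(i - 1))) / ((1 - a*b * q^i) * (1 - a*b*c*d * q^(i - 1)))"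
proof -
  define u where "u = q^i"
  have u: "u \<noteq> 0" unfolding u_def using nz by simp
  have f1': "1 - a*b*u \<noteq> 0" using f1 unfolding u_def .
  have f2': "1 - a*b*c*d*(u/q) \<noteq> 0" using f2 unfolding qpow_sub[OF nz(5) i] u_def .
  have n1: "1 - inverse a * inverse b * inverse u \<noteq> 0"
  proof
    assume "1 - inverse a * inverse b * inverse u = 0"
    then have "a*b*u = 1" using nz u by (simp add: field_simps)
    then show False using f1' by simp
  qed
  have n2: "1 - inverse a * inverse b * inverse c * inverse d * inverse (u/q) \<noteq> 0"
  proof
    assume "1 - inverse a * inverse b * inverse c * inverse d * inverse (u/q) = 0"
    then have "a*b*c*d*(u/q) = 1" using nz u by (simp add: field_simps)
    then show False using f2' by simp
  qed
  show ?thesis unfolding power_inverse qpow_sub[OF nz(5) i] u_def[symmetric]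
    apply (subst frac_eq_eq)
    using n1 n2 f1' f2' apply simp_all
    using nz u apply (simp add: field_simps) done
qed


lemma fin:
  fixes K' g U x h V X Kr z :: complex
  assumes "K' * (g / (x*h)) = Kr / z"
  shows "K' * (g*U) / (x*(h*V)) * X = Kr * U / (z*V) * X"
proof -
  have "K' * (g*U) / (x*(h*V)) = (K' * (g / (x*h))) * (U/V)" by (simp add: mult_ac)
  also have "\<dots> = Kr * U / (z*V)" unfolding assms by (simp add: mult_ac)
  finally show ?thesis by simp
qed

lemma common_rw:
  fixes a b c d q y :: complex
  assumes nz: "a \<noteq> 0" "b \<noteq> 0" "c \<noteq> 0" "d \<noteq> 0" "q \<noteq> 0" "y \<noteq> 0" and i: "1 \<le> i"
  shows "qpoch (inverse a * inverse b * inverse c * inverse d) (inverse q) (2*i)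
      = ((- inverse (a*b*c*d)) ^ (2*i) * Wp q (2*i) * (1 - a*b*c*d*q^(2*i-1))) * qpoch (a*b*c*d) q (2*i-1)"
   and "qpoch (inverse q) (inverse q) i * qpoch (inverse b * inverse c) (inverse q) i
        * qpoch (inverse b * inverse d) (inverse q) i * qpoch (inverse c * inverse d) (inverse q) i
      = ((- inverse q) ^ i * Wp q i * ((- inverse (b*c)) ^ i * Wp q i)
          * ((- inverse (b*d)) ^ i * Wp q i) * ((- inverse (c*d)) ^ i * Wp q i))
        * (qpoch q q i * qpoch (b*c) q i * qpoch (b*d) q i * qpoch (c*d) q i)"
   and "AWP i y (inverse a) (inverse b) (inverse c) (inverse d) (inverse q) = AWP i y a b c d q"
   and "AWP (i-1) y (inverse a * inverse q) (inverse b * inverse q) (inverse c) (inverse d) (inverse q)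
      = AWP (i-1) y (a*q) (b*q) c d q"
   and "y * (1 - inverse a * inverse y) * (1 - inverse b * inverse y)
      = inverse a * inverse b * inverse y * (1 - a*y) * (1 - b*y)"
proof -
  have "inverse a * inverse b * inverse c * inverse d = inverse (a*b*c*d)" by (simp add: inverse_mult_distrib)
  moreover have "qpoch (a*b*c*d) q (2*i) = qpoch (a*b*c*d) q (2*i-1) * (1 - a*b*c*d*q^(2*i-1))"
    using i qpoch_Suc[of "a*b*c*d" q "2*i-1"] by simp
  ultimately show "qpoch (inverse a * inverse b * inverse c * inverse d) (inverse q) (2*i)
      = ((- inverse (a*b*c*d)) ^ (2*i) * Wp q (2*i) * (1 - a*b*c*d*q^(2*i-1))) * qpoch (a*b*c*d) q (2*i-1)"
    using qpoch_inv[of "a*b*c*d" q "2*i"] nz by (simp add: mult_ac)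
  have e: "inverse b * inverse c = inverse (b*c)" "inverse b * inverse d = inverse (b*d)" "inverse c * inverse d = inverse (c*d)"
    by (simp_all add: inverse_mult_distrib)
  show "qpoch (inverse q) (inverse q) i * qpoch (inverse b * inverse c) (inverse q) i
        * qpoch (inverse b * inverse d) (inverse q) i * qpoch (inverse c * inverse d) (inverse q) i
      = ((- inverse q) ^ i * Wp q i * ((- inverse (b*c)) ^ i * Wp q i)
          * ((- inverse (b*d)) ^ i * Wp q i) * ((- inverse (c*d)) ^ i * Wp q i))
        * (qpoch q q i * qpoch (b*c) q i * qpoch (b*d) q i * qpoch (c*d) q i)"
    unfolding e qpoch_inv[OF nz(5) nz(5)] qpoch_inv[OF no_zero_divisors[OF nz(2,3)] nz(5)]
      qpoch_inv[OF no_zero_divisors[OF nz(2,4)] nz(5)] qpoch_inv[OF no_zero_divisors[OF nz(3,4)] nz(5)]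
    by (simp only: mult_ac)
  show "AWP i y (inverse a) (inverse b) (inverse c) (inverse d) (inverse q) = AWP i y a b c d q"
    by (rule AWP_inv) (use nz in auto)
  have "inverse a * inverse q = inverse (a*q)" "inverse b * inverse q = inverse (b*q)"
    by (simp_all add: inverse_mult_distrib)
  then show "AWP (i-1) y (inverse a * inverse q) (inverse b * inverse q) (inverse c) (inverse d) (inverse q)
      = AWP (i-1) y (a*q) (b*q) c d q"
    using AWP_inv[of "a*q" "b*q" c d q y "i-1"] nz by simp
  show "y * (1 - inverse a * inverse y) * (1 - inverse b * inverse y)
      = inverse a * inverse b * inverse y * (1 - a*y) * (1 - b*y)"
    using nz by (simp add: field_simps)
qed

lemma eplus_gen_inv:
  fixes a b c d q y :: complex
  assumes nz: "a \<noteq> 0" "b \<noteq> 0" "c \<noteq> 0" "d \<noteq> 0" "q \<noteq> 0" "y \<noteq> 0" and i: "1 \<le> i"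
    and ab: "a*b \<noteq> 1" and e: "1 - a*b*c*d*q^(2*i-1) \<noteq> 0"
  shows "eplus_gen i y (inverse a) (inverse b) (inverse c) (inverse d) (inverse q)
     = (a*b * (1 - q^i) * (1 - c*d * q^(i - 1))) / (a*b - 1)
           * qpoch (a*b*c*d) q (2*i - 1)
             / (a^i * (qpoch q q i * qpoch (b*c) q i * qpoch (b*d) q i * qpoch (c*d) q i))
           * (AWP i y a b c d q - inverse a * inverse b * inverse y * (1 - a*y) * (1 - b*y)
                        * AWP (i - 1) y (a*q) (b*q) c d q)"
  unfolding eplus_gen_def common_rw[OF nz i]
  apply (rule fin)
  unfolding ratio_gh[OF nz(1-5) i] times_divide_eq_right Kplus[OF nz(1-5) i ab e] ..

lemma eminus_inv:
  fixes a b c d q y :: complex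
  assumes nz: "a \<noteq> 0" "b \<noteq> 0" "c \<noteq> 0" "d \<noteq> 0" "q \<noteq> 0" "y \<noteq> 0" and i: "1 \<le> i"
    and ab: "a*b \<noteq> 1" and e: "1 - a*b*c*d*q^(2*i-1) \<noteq> 0"
    and f1: "1 - a*b*q^i \<noteq> 0" and f2: "1 - a*b*c*d*q^(i-1) \<noteq> 0"
  shows "eminus i y (inverse a) (inverse b) (inverse c) (inverse d) (inverse q)
     = ((1 - a*b * q^i) * (1 - a*b*c*d * q^(i - 1))) / (1 - a*b)
           * qpoch (a*b*c*d) q (2*i - 1)
             / (a^i * (qpoch q q i * qpoch (b*c) q i * qpoch (b*d) q i * qpoch (c*d) q i))
           * (AWP i y a b c d q - (a*b * (1 - q^i) * (1 - c*d * q^(i - 1)))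
                        / ((1 - a*b * q^i) * (1 - a*b*c*d * q^(i - 1)))
               * (inverse a * inverse b * inverse y * (1 - a*y) * (1 - b*y)
                        * AWP (i - 1) y (a*q) (b*q) c d q))"
proof -
  have i0: "i \<noteq> 0" using i by simp
  have br: "AWP i y (inverse a) (inverse b) (inverse c) (inverse d) (inverse q)
        - (inverse a * inverse b * (1 - inverse q ^ i) * (1 - inverse c * inverse d * inverse q ^ (i - 1)))
            / ((1 - inverse a * inverse b * inverse q ^ i) * (1 - inverse a * inverse b * inverse c * inverse d * inverse q ^ (i - 1)))
          * y * (1 - inverse a * inverse y) * (1 - inverse b * inverse y)
          * AWP (i - 1) y (inverse a * inverse q) (inverse b * inverse q) (inverse c) (inverse d) (inverse q)
      = AWP i y a b c d q - (a*b * (1 - q^i) * (1 - c*d * q^(i - 1)))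
                        / ((1 - a*b * q^i) * (1 - a*b*c*d * q^(i - 1)))
               * (inverse a * inverse b * inverse y * (1 - a*y) * (1 - b*y)
                        * AWP (i - 1) y (a*q) (b*q) c d q)"
  proof -
    have "(inverse a * inverse b * (1 - inverse q ^ i) * (1 - inverse c * inverse d * inverse q ^ (i - 1)))
            / ((1 - inverse a * inverse b * inverse q ^ i) * (1 - inverse a * inverse b * inverse c * inverse d * inverse q ^ (i - 1)))
          * y * (1 - inverse a * inverse y) * (1 - inverse b * inverse y)
          * AWP (i - 1) y (inverse a * inverse q) (inverse b * inverse q) (inverse c) (inverse d) (inverse q)
        = (inverse a * inverse b * (1 - inverse q ^ i) * (1 - inverse c * inverse d * inverse q ^ (i - 1)))
            / ((1 - inverse a * inverse b * inverse q ^ i) * (1 - inverse a * inverse b * inverse c * inverse d * inverse q ^ (i - 1)))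
          * (y * (1 - inverse a * inverse y) * (1 - inverse b * inverse y)
          * AWP (i - 1) y (inverse a * inverse q) (inverse b * inverse q) (inverse c) (inverse d) (inverse q))"
      by (simp only: mult.assoc)
    then show ?thesis unfolding common_rw(3,4,5)[OF nz i] Fminus[OF nz(1-5) i f1 f2] by simp
  qed
  show ?thesis
    unfolding eminus_def if_not_P[OF i0] br common_rw(1,2)[OF nz i]
    apply (rule fin)
    unfolding ratio_gh[OF nz(1-5) i] times_divide_eq_right Kminus[OF nz(1-5) i ab e] ..
qed


lemma T_odd: "(\<Sum>k<2*m+1. k) = 3 * (\<Sum>k<Suc m. k) + (\<Sum>k<m. (k::nat))"
proof (induction m)
  case 0 then show ?case by simp
next
  case (Suc m)
  have "(\<Sum>k<2*Suc m+1. k) = (\<Sum>k<2*m+1. k) + (2*m+1) + (2*m+2)"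
    by (simp add: lessThan_Suc)
  then show ?case using Suc by (simp add: lessThan_Suc)
qed

lemma Wp_odd: "Wp q (2*m+1) = Wp q (Suc m) ^ 3 * Wp q m"
  unfolding Wp_pow T_odd mult.commute[of 3] power_add power_mult ..

lemma ratio_last:
  fixes a b c d q :: complex
  assumes nz: "a \<noteq> 0" "b \<noteq> 0" "c \<noteq> 0" "d \<noteq> 0" "q \<noteq> 0" and D: "1 \<le> D"
    and abq: "a*b*q^D = 1"
  shows "((- inverse (a*b*c*d)) ^ (2*D-1) * Wp q (2*D-1))
     / (inverse a ^ D * ((- inverse q) ^ D * Wp q D * ((- inverse (b*c)) ^ D * Wp q D)
          * ((- inverse (b*d)) ^ D * Wp q D) * ((- inverse (c*d)) ^ (D-1) * Wp q (D-1))))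
     = 1 / a^D"
proof -
  obtain m where m: "D = Suc m" using D by (cases D) auto
  have e2: "2*D-1 = 2*m+1" using m by simp
  define W1 where "W1 = Wp q (Suc m)"
  define W0 where "W0 = Wp q m"
  define R where "R = inverse (b^2*c^2*d^2) ^ m"
  define Am where "Am = a^m"
  define Qm where "Qm = q^m"
  have nzW: "W1 \<noteq> 0" "W0 \<noteq> 0" unfolding W1_def W0_def using nz by (auto simp: Wp_nz)
  have nzR: "R \<noteq> 0" "Am \<noteq> 0" "Qm \<noteq> 0" unfolding R_def Am_def Qm_def using nz by auto
  have rel: "a*b*q*Qm = 1" using abq unfolding m Qm_def by (simp add: mult_ac)
  have g: "(- inverse (a*b*c*d)) ^ (2*D-1) * Wp q (2*D-1)
      = (- inverse (a*b*c*d)) * (inverse Am ^ 2 * R) * (W1^3 * W0)"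
  proof -
    have "(- inverse (a*b*c*d)) ^ (2*m+1) = (- inverse (a*b*c*d)) * ((inverse (a*b*c*d))^2)^m"
      by (simp add: power_mult power_add mult.commute[of 2 m] flip: power_mult)
    also have "(inverse (a*b*c*d))^2 = inverse (a^2) * inverse (b^2*c^2*d^2)"
      by (simp add: power2_eq_square inverse_mult_distrib mult_ac)
    also have "(inverse (a^2) * inverse (b^2*c^2*d^2))^m = inverse Am ^ 2 * R"
      unfolding R_def Am_def by (simp add: power_mult_distrib power_inverse flip: power_mult) (simp add: power_mult mult.commute)
    finally show ?thesis unfolding e2 Wp_odd W1_def W0_def by simp
  qed
  have h: "(- inverse q) ^ D * Wp q D * ((- inverse (b*c)) ^ D * Wp q D)
          * ((- inverse (b*d)) ^ D * Wp q D) * ((- inverse (c*d)) ^ (D-1) * Wp q (D-1))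
      = ((- inverse q) * (- inverse (b*c)) * (- inverse (b*d)))
        * ((- inverse q) ^ m * (- inverse (b*c)) ^ m * (- inverse (b*d)) ^ m * (- inverse (c*d)) ^ m) * (W1^3 * W0)"
    unfolding m W1_def W0_def by (simp only: power_Suc diff_Suc_1 power3_eq_cube mult_ac)
  also have "\<dots> = - (inverse q * inverse (b*c) * inverse (b*d)) * (inverse Qm * R) * (W1^3 * W0)"
  proof -
    have "inverse q * inverse (b*c) * inverse (b*d) * inverse (c*d) = inverse q * inverse (b^2*c^2*d^2)"
      by (simp add: inverse_mult_distrib power2_eq_square mult_ac)
    note ee = this
    have "((- inverse q) ^ m * (- inverse (b*c)) ^ m * (- inverse (b*d)) ^ m * (- inverse (c*d)) ^ m)
        = inverse Qm * R"
      unfolding neg4 R_def Qm_def by (simp only: ee power_mult_distrib power_inverse)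
    then show ?thesis by simp
  qed
  finally have h': "(- inverse q) ^ D * Wp q D * ((- inverse (b*c)) ^ D * Wp q D)
          * ((- inverse (b*d)) ^ D * Wp q D) * ((- inverse (c*d)) ^ (D-1) * Wp q (D-1))
      = - (inverse q * inverse (b*c) * inverse (b*d)) * (inverse Qm * R) * (W1^3 * W0)" .
  have aD: "a^D = a * Am" "inverse a ^ D = inverse (a*Am)" unfolding m Am_def by (simp_all add: power_inverse)
  have bq: "b = inverse (a*q*Qm)" using rel nz nzR by (simp add: field_simps)
  show ?thesis unfolding g h' aD using nz nzW nzR unfolding bq
    by (simp add: field_simps power2_eq_square power3_eq_cube)
qed


lemma fin1:
  fixes g U x h V X z :: complex
  assumes "g / (x*h) = 1 / z"
  shows "g*U / (x*(h*V)) * X = U / (z*V) * X"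
proof -
  have "g*U / (x*(h*V)) = (g / (x*h)) * (U/V)" by (simp add: mult_ac)
  also have "\<dots> = U / (z*V)" unfolding assms by simp
  finally show ?thesis by simp
qed

lemma eplus_last_inv:
  fixes a b c d q y :: complex
  assumes nz: "a \<noteq> 0" "b \<noteq> 0" "c \<noteq> 0" "d \<noteq> 0" "q \<noteq> 0" "y \<noteq> 0" and D: "1 \<le> D"
    and abq: "a*b*q^D = 1"
  shows "eplus_last D y (inverse a) (inverse b) (inverse c) (inverse d) (inverse q)
    = qpoch (a*b*c*d) q (2*D - 1)
             / (a^D * (qpoch q q D * qpoch (b*c) q D * qpoch (b*d) q D * qpoch (c*d) q (D - 1)))
           * AWP D y a b c d q"
proof -
  have e: "inverse b * inverse c = inverse (b*c)" "inverse b * inverse d = inverse (b*d)" "inverse c * inverse d = inverse (c*d)"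
    by (simp_all add: inverse_mult_distrib)
  have n1: "qpoch (inverse a * inverse b * inverse c * inverse d) (inverse q) (2*D-1)
      = ((- inverse (a*b*c*d)) ^ (2*D-1) * Wp q (2*D-1)) * qpoch (a*b*c*d) q (2*D-1)"
  proof -
    have "inverse a * inverse b * inverse c * inverse d = inverse (a*b*c*d)" by (simp add: inverse_mult_distrib)
    then show ?thesis using qpoch_inv[of "a*b*c*d" q "2*D-1"] nz by simp
  qed
  have n2: "qpoch (inverse q) (inverse q) D * qpoch (inverse b * inverse c) (inverse q) D
        * qpoch (inverse b * inverse d) (inverse q) D * qpoch (inverse c * inverse d) (inverse q) (D-1)
      = ((- inverse q) ^ D * Wp q D * ((- inverse (b*c)) ^ D * Wp q D)
          * ((- inverse (b*d)) ^ D * Wp q D) * ((- inverse (c*d)) ^ (D-1) * Wp q (D-1)))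
        * (qpoch q q D * qpoch (b*c) q D * qpoch (b*d) q D * qpoch (c*d) q (D-1))"
    unfolding e qpoch_inv[OF nz(5) nz(5)] qpoch_inv[OF no_zero_divisors[OF nz(2,3)] nz(5)]
      qpoch_inv[OF no_zero_divisors[OF nz(2,4)] nz(5)] qpoch_inv[OF no_zero_divisors[OF nz(3,4)] nz(5)]
    by (simp only: mult_ac)
  have aw: "AWP D y (inverse a) (inverse b) (inverse c) (inverse d) (inverse q) = AWP D y a b c d q"
    by (rule AWP_inv) (use nz in auto)
  show ?thesis unfolding eplus_last_def n1 n2 aw
    by (rule fin1) (rule ratio_last[OF nz(1-5) D abq])
qed


theorem proposition10p7:
  fixes D :: nat and qh sh ssh r1h r2h a b c d :: complex
  assumes D3: "D \<ge> 3"
    and nonzero: "qh \<noteq> 0" "sh \<noteq> 0" "ssh \<noteq> 0" "r1h \<noteq> 0" "r2h \<noteq> 0"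
    and q_not_root: "\<forall>n::nat. n > 0 \<longrightarrow> (qh^2) ^ n \<noteq> 1"
    and sqrt_rel: "r1h * r2h = sh * ssh * qh ^ (D + 1)"
    and nondeg1: "\<forall>i. 1 \<le> i \<and> i \<le> D \<longrightarrow>
        (qh^2) ^ i \<noteq> 1 \<and> r1h^2 * (qh^2) ^ i \<noteq> 1 \<and> r2h^2 * (qh^2) ^ i \<noteq> 1 \<and>
        ssh^2 * (qh^2) ^ i / r1h^2 \<noteq> 1 \<and> ssh^2 * (qh^2) ^ i / r2h^2 \<noteq> 1"
    and nondeg2: "\<forall>i. 2 \<le> i \<and> i \<le> 2*D \<longrightarrow>
        sh^2 * (qh^2) ^ i \<noteq> 1 \<and> ssh^2 * (qh^2) ^ i \<noteq> 1"
    and a_def: "a = r1h * r2h / (ssh * qh ^ D)"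
    and b_def: "b = ssh / (r1h * r2h * qh ^ D)"
    and c_def: "c = r2h * ssh * qh ^ (D + 2) / r1h"
    and d_def: "d = r1h * ssh * qh ^ (D + 2) / r2h"
  shows
    "(let q = qh^2;
          P = (\<lambda>i y. AWP i y a b c d q);
          Q = (\<lambda>i y. inverse a * inverse b * inverse y * (1 - a*y) * (1 - b*y)
                        * AWP (i - 1) y (a*q) (b*q) c d q)
      in
      (\<forall>i y. 1 \<le> i \<and> i \<le> D - 1 \<and> y \<noteq> 0 \<longrightarrow>
         eplus D (i - 1) y (inverse a) (inverse b) (inverse c) (inverse d) (inverse q)
         = (a*b * (1 - q^i) * (1 - c*d * q^(i - 1))) / (a*b - 1)
           * qpoch (a*b*c*d) q (2*i - 1)
             / (a^i * (qpoch q q i * qpoch (b*c) q i * qpoch (b*d) q i * qpoch (c*d) q i))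
           * (P i y - Q i y))
    \<and> (\<forall>i y. 1 \<le> i \<and> i \<le> D - 1 \<and> y \<noteq> 0 \<longrightarrow>
         eminus i y (inverse a) (inverse b) (inverse c) (inverse d) (inverse q)
         = ((1 - a*b * q^i) * (1 - a*b*c*d * q^(i - 1))) / (1 - a*b)
           * qpoch (a*b*c*d) q (2*i - 1)
             / (a^i * (qpoch q q i * qpoch (b*c) q i * qpoch (b*d) q i * qpoch (c*d) q i))
           * (P i y - (a*b * (1 - q^i) * (1 - c*d * q^(i - 1)))
                        / ((1 - a*b * q^i) * (1 - a*b*c*d * q^(i - 1))) * Q i y))
    \<and> (\<forall>y. y \<noteq> 0 \<longrightarrow>
         eminus 0 y (inverse a) (inverse b) (inverse c) (inverse d) (inverse q) = 1)
    \<and> (\<forall>y. y \<noteq> 0 \<longrightarrow>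
         eplus D (D - 1) y (inverse a) (inverse b) (inverse c) (inverse d) (inverse q)
         = qpoch (a*b*c*d) q (2*D - 1)
             / (a^D * (qpoch q q D * qpoch (b*c) q D * qpoch (b*d) q D * qpoch (c*d) q (D - 1)))
           * P D y))"
proof -
  define q where "q = qh^2"
  have q0: "q \<noteq> 0" unfolding q_def using nonzero by simp
  have qn: "\<And>n. n > 0 \<Longrightarrow> q ^ n \<noteq> 1" using q_not_root unfolding q_def by blast
  have a0: "a \<noteq> 0" "b \<noteq> 0" "c \<noteq> 0" "d \<noteq> 0"
    unfolding a_def b_def c_def d_def using nonzero by auto
  have qD: "q^D = (qh^D)^2" unfolding q_def by (simp add: power_mult mult.commute flip: power_mult)
  have abq: "a*b*q^D = 1" unfolding a_def b_def qD using nonzero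
    apply (simp add: field_simps) apply (simp add: power2_eq_square) done
  have ab1: "a*b \<noteq> 1"
  proof
    assume "a*b = 1"
    then have "q^D = 1" using abq by simp
    then show False using qn D3 by simp
  qed
  have abcd: "a*b*c*d = ssh^2 * q^2"
  proof -
    have "qh^(D+2) = qh^D * qh^2" by (rule power_add)
    then show ?thesis unfolding a_def b_def c_def d_def q_def using nonzero
      by (simp add: field_simps power2_eq_square)
  qed
  have e: "\<And>i. 1 \<le> i \<Longrightarrow> i \<le> D - 1 \<Longrightarrow> 1 - a*b*c*d*q^(2*i-1) \<noteq> 0"
  proof -
    fix i :: nat assume i: "1 \<le> i" "i \<le> D - 1"
    have "q^2 * q^(2*i-1) = q^(2*i+1)" using i by (simp add: power_add[symmetric])
    then have "a*b*c*d*q^(2*i-1) = ssh^2 * (qh^2)^(2*i+1)" unfolding abcd q_def by (simp add: mult_ac)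
    moreover have "ssh^2 * (qh^2)^(2*i+1) \<noteq> 1"
    proof -
      have r: "2 \<le> 2*i+1 \<and> 2*i+1 \<le> 2*D" using i by auto
      show ?thesis using nondeg2[rule_format, OF r] by blast
    qed
    ultimately show "1 - a*b*c*d*q^(2*i-1) \<noteq> 0" by simp
  qed
  have f2: "\<And>i. 1 \<le> i \<Longrightarrow> i \<le> D - 1 \<Longrightarrow> 1 - a*b*c*d*q^(i-1) \<noteq> 0"
  proof -
    fix i :: nat assume i: "1 \<le> i" "i \<le> D - 1"
    have "q^2 * q^(i-1) = q^(i+1)" using i by (simp add: power_add[symmetric])
    then have "a*b*c*d*q^(i-1) = ssh^2 * (qh^2)^(i+1)" unfolding abcd q_def by (simp add: mult_ac)
    moreover have "ssh^2 * (qh^2)^(i+1) \<noteq> 1"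
    proof -
      have r: "2 \<le> i+1 \<and> i+1 \<le> 2*D" using i by auto
      show ?thesis using nondeg2[rule_format, OF r] by blast
    qed
    ultimately show "1 - a*b*c*d*q^(i-1) \<noteq> 0" by simp
  qed
  have f1: "\<And>i. i \<le> D - 1 \<Longrightarrow> 1 - a*b*q^i \<noteq> 0"
  proof
    fix i :: nat assume i: "i \<le> D - 1" and h: "1 - a*b*q^i = 0"
    have "q^D = q^i * q^(D-i)" using i D3 by (simp add: power_add[symmetric])
    then have "1 = a*b*q^i * q^(D-i)" using abq by (simp add: mult_ac)
    then have "q^(D-i) = 1" using h by simp
    moreover have "D - i > 0" using i D3 by simp
    ultimately show False using qn by blast
  qed
  have y0: "\<And>y::complex. y \<noteq> 0 \<Longrightarrow> y \<noteq> 0" .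
  show ?thesis
    unfolding Let_def q_def[symmetric]
  proof (intro conjI allI impI)
    fix i y assume h: "1 \<le> i \<and> i \<le> D - 1 \<and> (y::complex) \<noteq> 0"
    then have i: "1 \<le> i" "i \<le> D - 1" "y \<noteq> 0" by auto
    have ne: "i \<noteq> D" "i - 1 + 1 = i" using i D3 by auto
    show "eplus D (i - 1) y (inverse a) (inverse b) (inverse c) (inverse d) (inverse q)
         = (a*b * (1 - q^i) * (1 - c*d * q^(i - 1))) / (a*b - 1)
           * qpoch (a*b*c*d) q (2*i - 1)
             / (a^i * (qpoch q q i * qpoch (b*c) q i * qpoch (b*d) q i * qpoch (c*d) q i))
           * (AWP i y a b c d q - inverse a * inverse b * inverse y * (1 - a*y) * (1 - b*y)
                        * AWP (i - 1) y (a*q) (b*q) c d q)"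
      unfolding eplus_def ne(2) if_not_P[OF ne(1)]
      by (rule eplus_gen_inv[OF a0 q0 i(3) i(1) ab1 e[OF i(1,2)]])
  next
    fix i y assume h: "1 \<le> i \<and> i \<le> D - 1 \<and> (y::complex) \<noteq> 0"
    then have i: "1 \<le> i" "i \<le> D - 1" "y \<noteq> 0" by auto
    show "eminus i y (inverse a) (inverse b) (inverse c) (inverse d) (inverse q)
         = ((1 - a*b * q^i) * (1 - a*b*c*d * q^(i - 1))) / (1 - a*b)
           * qpoch (a*b*c*d) q (2*i - 1)
             / (a^i * (qpoch q q i * qpoch (b*c) q i * qpoch (b*d) q i * qpoch (c*d) q i))
           * (AWP i y a b c d q - (a*b * (1 - q^i) * (1 - c*d * q^(i - 1)))
                        / ((1 - a*b * q^i) * (1 - a*b*c*d * q^(i - 1)))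
               * (inverse a * inverse b * inverse y * (1 - a*y) * (1 - b*y)
                        * AWP (i - 1) y (a*q) (b*q) c d q))"
      by (rule eminus_inv[OF a0 q0 i(3) i(1) ab1 e[OF i(1,2)] f1[OF i(2)] f2[OF i(1,2)]])
  next
    fix y :: complex assume "y \<noteq> 0"
    show "eminus 0 y (inverse a) (inverse b) (inverse c) (inverse d) (inverse q) = 1"
      by (simp add: eminus_def)
  next
    fix y :: complex assume y: "y \<noteq> 0"
    have ne: "D - 1 + 1 = D" using D3 by simp
    show "eplus D (D - 1) y (inverse a) (inverse b) (inverse c) (inverse d) (inverse q)
         = qpoch (a*b*c*d) q (2*D - 1)
             / (a^D * (qpoch q q D * qpoch (b*c) q D * qpoch (b*d) q D * qpoch (c*d) q (D - 1)))
           * AWP D y a b c d q"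
      unfolding eplus_def ne if_P[OF refl]
      by (rule eplus_last_inv[OF a0 q0 y _ abq]) (use D3 in simp)
  qed
qed

end
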